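(* Let $D$ be an associative division algebra finite-dimensional over its center $F$, let $\sigma\in\mathrm{Aut}(D)$ be such that $\sigma|_F$ has finite order $m$, let $F_0=\mathrm{Fix}(\sigma)\cap F$, and let $A=(D,\sigma,d)$ with $d\in D\setminus F_0$. Then every automorphism of $A$ of the form $H_{\mathrm{id},k}$ ($k\in F^\times$, $N_{F/F_0}(k)=1$) is an inner automorphism $G_c(\sum_{i=0}^{m-1}a_it^i)=(c^{-1}\sum_{i=0}^{m-1}a_it^i)c$ for some $c\in F^\times$ satisfying $k=\sigma(c)c^{-1}$.
   Context: $N_{F/F_0}$ is the norm of the cyclic Galois extension $F/F_0$. $D[t;\sigma]$ is the twisted polynomial ring: polynomials $\sum a_it^i$ ($a_i\in D$), multiplication determined by $ta=\sigma(a)t$. For $d\in D^\times$, $(D,\sigma,d)$ is the set of polynomials of degree $<m$ in $D[t;\sigma]$ with multiplication (used in the formula for $G_c$) $g\circ h=$ remainder of $gh$ on right division by $t^m-d$; it is a unital algebra over $F_0$ containing $D$. For $k\in F^\times$, $H_{\mathrm{id},k}(\sum_{i=0}^{m-1}a_it^i)=a_0+\sum_{i=1}^{m-1}a_i\big(\prod_{l=0}^{i-1}\sigma^l(k)\big)t^i$. *)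

theory Defs
  imports Main
begin

definition center :: "'a::division_ring set" where
  "center = {z. \<forall>x. z * x = x * z}"

definition fin_dim_over_center :: "'a::division_ring itself \<Rightarrow> bool" where
  "fin_dim_over_center _ \<longleftrightarrow>
     (\<exists>B::'a set. finite B \<and>
        (\<forall>x. \<exists>f. (\<forall>b\<in>B. f b \<in> center) \<and> x = (\<Sum>b\<in>B. f b * b)))"

definition ring_aut :: "('a::division_ring \<Rightarrow> 'a) \<Rightarrow> bool" where
  "ring_aut \<sigma> \<longleftrightarrow> bij \<sigma> \<and> (\<forall>x y. \<sigma> (x + y) = \<sigma> x + \<sigma> y)
     \<and> (\<forall>x y. \<sigma> (x * y) = \<sigma> x * \<sigma> y) \<and> \<sigma> 1 = 1"

definition order_on_center :: "('a::division_ring \<Rightarrow> 'a) \<Rightarrow> nat \<Rightarrow> bool" where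
  "order_on_center \<sigma> m \<longleftrightarrow> 0 < m \<and> (\<forall>z\<in>center. (\<sigma> ^^ m) z = z)
     \<and> (\<forall>j. 0 < j \<and> j < m \<longrightarrow> (\<exists>z\<in>center. (\<sigma> ^^ j) z \<noteq> z))"

definition fixed_center :: "('a::division_ring \<Rightarrow> 'a) \<Rightarrow> 'a set" where
  "fixed_center \<sigma> = {z \<in> center. \<sigma> z = z}"

definition norm_F :: "('a::division_ring \<Rightarrow> 'a) \<Rightarrow> nat \<Rightarrow> 'a \<Rightarrow> 'a" where
  "norm_F \<sigma> m k = prod_list (map (\<lambda>l. (\<sigma> ^^ l) k) [0..<m])"

text \<open>Twisted polynomials in D[t;sigma] are coefficient functions nat => D
  (finitely supported ones are the actual polynomials).  Product:
  (a_i t^i)(b_j t^j) = a_i sigma^i(b_j) t^(i+j).\<close>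
definition tw_mult :: "('a::division_ring \<Rightarrow> 'a) \<Rightarrow> (nat \<Rightarrow> 'a) \<Rightarrow> (nat \<Rightarrow> 'a) \<Rightarrow> nat \<Rightarrow> 'a" where
  "tw_mult \<sigma> a b n = (\<Sum>i\<le>n. a i * (\<sigma> ^^ i) (b (n - i)))"

definition tw_poly :: "(nat \<Rightarrow> 'a::zero) \<Rightarrow> bool" where
  "tw_poly q \<longleftrightarrow> (\<exists>N. \<forall>i\<ge>N. q i = 0)"

definition tw_add :: "(nat \<Rightarrow> 'a::plus) \<Rightarrow> (nat \<Rightarrow> 'a) \<Rightarrow> nat \<Rightarrow> 'a" where
  "tw_add a b = (\<lambda>i. a i + b i)"

definition tm_minus_d :: "nat \<Rightarrow> 'a::ring_1 \<Rightarrow> nat \<Rightarrow> 'a" where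
  "tm_minus_d m d = (\<lambda>i. (if i = m then 1 else 0) - (if i = 0 then d else 0))"

definition tw_const :: "'a::zero \<Rightarrow> nat \<Rightarrow> 'a" where
  "tw_const c = (\<lambda>i. if i = 0 then c else 0)"

text \<open>Underlying set of A = (D,sigma,d): polynomials of degree < m.\<close>
definition petit_carrier :: "nat \<Rightarrow> (nat \<Rightarrow> 'a::zero) set" where
  "petit_carrier m = {a. \<forall>i\<ge>m. a i = 0}"

text \<open>Multiplication of A: remainder of gh on right division by t^m - d,
  i.e. the unique r of degree < m with gh = q (t^m - d) + r.\<close>
definition petit_mult :: "('a::division_ring \<Rightarrow> 'a) \<Rightarrow> nat \<Rightarrow> 'a
    \<Rightarrow> (nat \<Rightarrow> 'a) \<Rightarrow> (nat \<Rightarrow> 'a) \<Rightarrow> nat \<Rightarrow> 'a" where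
  "petit_mult \<sigma> m d g h = (THE r. r \<in> petit_carrier m \<and>
      (\<exists>q. tw_poly q \<and> tw_mult \<sigma> g h = tw_add (tw_mult \<sigma> q (tm_minus_d m d)) r))"

definition petit_aut :: "('a::division_ring \<Rightarrow> 'a) \<Rightarrow> nat \<Rightarrow> 'a
    \<Rightarrow> ((nat \<Rightarrow> 'a) \<Rightarrow> (nat \<Rightarrow> 'a)) \<Rightarrow> bool" where
  "petit_aut \<sigma> m d H \<longleftrightarrow>
     bij_betw H (petit_carrier m) (petit_carrier m)
     \<and> (\<forall>x\<in>petit_carrier m. \<forall>y\<in>petit_carrier m. H (tw_add x y) = tw_add (H x) (H y))
     \<and> (\<forall>x\<in>petit_carrier m. \<forall>y\<in>petit_carrier m.
            H (petit_mult \<sigma> m d x y) = petit_mult \<sigma> m d (H x) (H y))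
     \<and> (\<forall>c\<in>fixed_center \<sigma>. \<forall>x\<in>petit_carrier m. H (\<lambda>i. c * x i) = (\<lambda>i. c * H x i))"

definition H_id :: "('a::division_ring \<Rightarrow> 'a) \<Rightarrow> nat \<Rightarrow> 'a \<Rightarrow> (nat \<Rightarrow> 'a) \<Rightarrow> nat \<Rightarrow> 'a" where
  "H_id \<sigma> m k a = (\<lambda>i. if i < m then a i * prod_list (map (\<lambda>l. (\<sigma> ^^ l) k) [0..<i]) else 0)"

definition G_inner :: "('a::division_ring \<Rightarrow> 'a) \<Rightarrow> nat \<Rightarrow> 'a \<Rightarrow> 'a \<Rightarrow> (nat \<Rightarrow> 'a) \<Rightarrow> nat \<Rightarrow> 'a" where
  "G_inner \<sigma> m d c x =
     petit_mult \<sigma> m d (petit_mult \<sigma> m d (tw_const (inverse c)) x) (tw_const c)"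

end

theory Submission
  imports Defs
begin

lemma ra_add: "ring_aut \<sigma> \<Longrightarrow> \<sigma> (x + y) = \<sigma> x + \<sigma> y" by (simp add: ring_aut_def)
lemma ra_mult: "ring_aut \<sigma> \<Longrightarrow> \<sigma> (x * y) = \<sigma> x * \<sigma> y" by (simp add: ring_aut_def)
lemma ra_one: "ring_aut \<sigma> \<Longrightarrow> \<sigma> 1 = 1" by (simp add: ring_aut_def)
lemma ra_bij: "ring_aut \<sigma> \<Longrightarrow> bij \<sigma>" by (simp add: ring_aut_def)
lemma ra_zero: "ring_aut (\<sigma>::'a::division_ring \<Rightarrow> 'a) \<Longrightarrow> \<sigma> 0 = 0"
proof -
  assume a: "ring_aut \<sigma>"
  have "\<sigma> (0 + 0) = \<sigma> 0 + \<sigma> 0" using ra_add[OF a] .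
  thus ?thesis by simp
qed
lemma ra_diff: "ring_aut (\<sigma>::'a::division_ring \<Rightarrow> 'a) \<Longrightarrow> \<sigma> (x - y) = \<sigma> x - \<sigma> y"
proof -
  assume a: "ring_aut \<sigma>"
  have "\<sigma> (x - y + y) = \<sigma> (x - y) + \<sigma> y" using ra_add[OF a] .
  thus ?thesis by (simp add: algebra_simps)
qed
lemma ra_inj: assumes "ring_aut \<sigma>" "\<sigma> x = \<sigma> y" shows "x = y"
  using bij_is_inj[OF ra_bij[OF assms(1)]] assms(2) by (simp add: inj_eq)
lemma ra_nz: "ring_aut (\<sigma>::'a::division_ring \<Rightarrow> 'a) \<Longrightarrow> x \<noteq> 0 \<Longrightarrow> \<sigma> x \<noteq> 0"
  using ra_inj[of \<sigma> x 0] ra_zero[of \<sigma>] by auto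
lemma ra_inverse: assumes a: "ring_aut (\<sigma>::'a::division_ring \<Rightarrow> 'a)" shows "\<sigma> (inverse x) = inverse (\<sigma> x)"
proof (cases "x = 0")
  case True
  thus ?thesis using True ra_zero[OF a] by simp
next
  case False
  have "\<sigma> x * \<sigma> (inverse x) = 1" using False ra_mult[OF a, symmetric] ra_one[OF a] by simp
  from Fields.inverse_unique[OF this] show ?thesis by simp
qed
lemma ra_funpow: "ring_aut \<sigma> \<Longrightarrow> ring_aut (\<sigma> ^^ n)"
proof (induction n)
  case 0 thus ?case by (simp add: ring_aut_def bij_def inj_on_def surj_def)
next
  case (Suc n)
  have "bij (\<sigma> \<circ> \<sigma> ^^ n)" using ra_bij[OF Suc.prems] ra_bij[OF Suc.IH[OF Suc.prems]] by (metis bij_comp)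
  thus ?case using Suc unfolding ring_aut_def by auto
qed

lemma center_iff: "z \<in> center \<longleftrightarrow> (\<forall>x. z * x = x * z)" by (simp add: center_def)
lemma center_ra: "ring_aut \<tau> \<Longrightarrow> z \<in> center \<Longrightarrow> \<tau> z \<in> center"
  unfolding center_iff
proof
  fix x assume a: "ring_aut \<tau>" and z: "\<forall>x. z * x = x * z"
  obtain y where y: "x = \<tau> y" using ra_bij[OF a] by (metis bij_pointE)
  show "\<tau> z * x = x * \<tau> z" unfolding y using ra_mult[OF a] z by metis
qed
lemma center_mult: "a \<in> center \<Longrightarrow> b \<in> center \<Longrightarrow> a * b \<in> center"
  unfolding center_iff by (metis mult.assoc)
lemma center_add: "a \<in> center \<Longrightarrow> b \<in> center \<Longrightarrow> a + b \<in> center"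
  unfolding center_iff by (simp add: algebra_simps)
lemma center_diff: "a \<in> center \<Longrightarrow> b \<in> center \<Longrightarrow> a - b \<in> center"
  unfolding center_iff by (simp add: algebra_simps)
lemma center_one: "1 \<in> center" unfolding center_iff by simp
lemma center_zero: "0 \<in> center" unfolding center_iff by simp
lemma center_inverse: "(a::'a::division_ring) \<in> center \<Longrightarrow> inverse a \<in> center"
  unfolding center_iff
proof
  fix x assume z: "\<forall>x. a * x = x * a"
  show "inverse a * x = x * inverse a"
  proof (cases "a = 0")
    case True thus ?thesis by simp
  next
    case False
    have "x * inverse a = ((inverse a * a) * x) * inverse a" using False by simp
    also have "\<dots> = inverse a * (a * x) * inverse a" by (simp only: mult.assoc)
    also have "\<dots> = inverse a * (x * a) * inverse a" using z by simp
    also have "\<dots> = (inverse a * x) * (a * inverse a)" by (simp only: mult.assoc)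
    also have "\<dots> = inverse a * x" using False by simp
    finally show ?thesis by simp
  qed
qed
lemma center_comm: "a \<in> center \<Longrightarrow> a * x = x * a" by (simp add: center_iff)
lemma center_sum: "(\<And>i. i \<in> S \<Longrightarrow> f i \<in> center) \<Longrightarrow> sum f S \<in> center"
  by (induction S rule: infinite_finite_induct) (auto simp: center_zero center_add)
lemma center_prod_list: "(\<And>x. x \<in> set xs \<Longrightarrow> x \<in> center) \<Longrightarrow> prod_list xs \<in> center"
  by (induction xs) (auto simp: center_one center_mult)
lemma prod_list_nz: "(\<And>x. x \<in> set xs \<Longrightarrow> (x::'a::division_ring) \<noteq> 0) \<Longrightarrow> prod_list xs \<noteq> 0"
  by (induction xs) auto
lemma ra_prod_list: "ring_aut \<sigma> \<Longrightarrow> \<sigma> (prod_list xs) = prod_list (map \<sigma> xs)"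
  by (induction xs) (auto simp: ra_one ra_mult)
lemma ra_sum: assumes a: "ring_aut (\<sigma>::'a::division_ring \<Rightarrow> 'a)" shows "\<sigma> (sum f S) = (\<Sum>i\<in>S. \<sigma> (f i))"
  using sum_comp_morphism[of \<sigma> f S, OF ra_zero[OF a] ra_add[OF a]] by (simp add: comp_def)


lemma distinct_lt:
  assumes a: "ring_aut \<sigma>" and o: "order_on_center \<sigma> m" and ij: "i < j" "j < m"
  shows "\<exists>z\<in>center. (\<sigma>^^i) z \<noteq> (\<sigma>^^j) z"
proof -
  obtain z where z: "z \<in> center" "(\<sigma>^^(j-i)) z \<noteq> z"
    using o ij unfolding order_on_center_def by (metis less_imp_diff_less zero_less_diff)
  have "(\<sigma>^^j) z = (\<sigma>^^i) ((\<sigma>^^(j-i)) z)"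
    using ij funpow_add[of i "j-i" \<sigma>] by (simp add: le_add_diff_inverse less_imp_le_nat)
  hence "(\<sigma>^^i) z \<noteq> (\<sigma>^^j) z" using z ra_inj[OF ra_funpow[OF a, of i]] by metis
  thus ?thesis using z by blast
qed

lemma distinct_ne:
  assumes a: "ring_aut \<sigma>" and o: "order_on_center \<sigma> m" and ij: "i \<noteq> j" "i < m" "j < m"
  shows "\<exists>z\<in>center. (\<sigma>^^i) z \<noteq> (\<sigma>^^j) z"
proof (cases "i < j")
  case True thus ?thesis using distinct_lt[OF a o] ij by blast
next
  case False
  hence "j < i" using ij by simp
  thus ?thesis using distinct_lt[OF a o, of j i] ij by metis
qed

lemma dedekind:
  assumes a: "ring_aut (\<sigma>::'a::division_ring \<Rightarrow> 'a)" and o: "order_on_center \<sigma> m"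
  shows "finite T \<Longrightarrow> T \<subseteq> {..<m} \<Longrightarrow> T \<noteq> {} \<Longrightarrow> (\<forall>i\<in>T. c i \<in> center \<and> c i \<noteq> 0)
    \<Longrightarrow> \<exists>a\<in>center. (\<Sum>i\<in>T. c i * (\<sigma>^^i) a) \<noteq> 0"
proof (induction "card T" arbitrary: T c rule: less_induct)
  case less
  show ?case
  proof (rule ccontr)
    assume contra: "\<not> (\<exists>a\<in>center. (\<Sum>i\<in>T. c i * (\<sigma>^^i) a) \<noteq> 0)"
    hence Z: "\<And>a. a \<in> center \<Longrightarrow> (\<Sum>i\<in>T. c i * (\<sigma>^^i) a) = 0" by blast
    obtain j where j: "j \<in> T" using less.prems by blast
    show False
    proof (cases "T = {j}")
      case True
      have "(\<Sum>i\<in>T. c i * (\<sigma>^^i) 1) = c j" using True ra_one[OF ra_funpow[OF a]] by simp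
      thus False using Z[OF center_one] j less.prems by simp
    next
      case False
      then obtain j' where j': "j' \<in> T" "j' \<noteq> j" using j by blast
      have jm: "j < m" "j' < m" using j j' less.prems by auto
      obtain z where z: "z \<in> center" "(\<sigma>^^j') z \<noteq> (\<sigma>^^j) z"
        using distinct_ne[OF a o j'(2) jm(2) jm(1)] by blast
      define c' where "c' i = c i * ((\<sigma>^^i) z - (\<sigma>^^j) z)" for i
      have key: "(\<Sum>i\<in>T. c' i * (\<sigma>^^i) b) = 0" if b: "b \<in> center" for b
      proof -
        have zb: "z * b \<in> center" using z b center_mult by blast
        have t: "c' i * (\<sigma>^^i) b = c i * (\<sigma>^^i) (z * b) - (\<sigma>^^j) z * (c i * (\<sigma>^^i) b)"
          if "i \<in> T" for i
        proof -
          have cc: "c i \<in> center" using that less.prems by blast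
          have "c' i * (\<sigma>^^i) b = c i * (\<sigma>^^i) z * (\<sigma>^^i) b - c i * (\<sigma>^^j) z * (\<sigma>^^i) b"
            unfolding c'_def by (simp add: algebra_simps)
          also have "c i * (\<sigma>^^j) z = (\<sigma>^^j) z * c i" using center_comm[OF cc] by simp
          finally show ?thesis using ra_mult[OF ra_funpow[OF a, of i]] by (simp add: mult.assoc)
        qed
        have "(\<Sum>i\<in>T. c' i * (\<sigma>^^i) b) = (\<Sum>i\<in>T. c i * (\<sigma>^^i) (z * b)) - (\<sigma>^^j) z * (\<Sum>i\<in>T. c i * (\<sigma>^^i) b)"
          using t by (simp add: sum_subtractf sum_distrib_left)
        also have "\<dots> = 0" using Z[OF zb] Z[OF b] by simp
        finally show ?thesis .
      qed
      define T'' where "T'' = {i \<in> T - {j}. c' i \<noteq> 0}"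
      have fin: "finite T''" using less.prems unfolding T''_def by simp
      have sub: "T'' \<subseteq> T" unfolding T''_def by blast
      have cardlt: "card T'' < card T"
      proof -
        have "T'' \<subseteq> T - {j}" unfolding T''_def by blast
        hence "card T'' \<le> card (T - {j})" using less.prems by (simp add: card_mono)
        also have "\<dots> < card T" using j less.prems by (metis card_Diff1_less)
        finally show ?thesis .
      qed
      have cj': "c' j' \<noteq> 0"
        using z(2) j' less.prems unfolding c'_def by simp
      hence ne: "T'' \<noteq> {}" using j' unfolding T''_def by blast
      have cc: "\<forall>i\<in>T''. c' i \<in> center \<and> c' i \<noteq> 0"
        unfolding T''_def c'_def using less.prems z(1)
        by (auto intro!: center_mult center_diff center_ra[OF ra_funpow[OF a]])
      obtain b where b: "b \<in> center" "(\<Sum>i\<in>T''. c' i * (\<sigma>^^i) b) \<noteq> 0"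
        using less.hyps[OF cardlt fin _ ne cc] sub less.prems by blast
      have "(\<Sum>i\<in>T''. c' i * (\<sigma>^^i) b) = (\<Sum>i\<in>T. c' i * (\<sigma>^^i) b)"
        by (rule sum.mono_neutral_left) (use less.prems sub in \<open>auto simp: T''_def c'_def\<close>)
      thus False using key[OF b(1)] b(2) by simp
    qed
  qed
qed


definition NN :: "('a::division_ring \<Rightarrow> 'a) \<Rightarrow> 'a \<Rightarrow> nat \<Rightarrow> 'a" where
  "NN \<sigma> k i = prod_list (map (\<lambda>l. (\<sigma> ^^ l) k) [0..<i])"

lemma NN_Suc: "NN \<sigma> k (Suc i) = NN \<sigma> k i * (\<sigma>^^i) k"
  by (simp add: NN_def)
lemma NN_Suc2: "NN \<sigma> k (Suc i) = k * prod_list (map (\<lambda>l. (\<sigma> ^^ Suc l) k) [0..<i])"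
proof -
  have "[0..<Suc i] = 0 # map Suc [0..<i]" by (simp add: upt_conv_Cons map_Suc_upt)
  thus ?thesis by (simp add: NN_def comp_def)
qed
lemma NN_center: "ring_aut \<sigma> \<Longrightarrow> k \<in> center \<Longrightarrow> NN \<sigma> k i \<in> center"
  unfolding NN_def by (rule center_prod_list) (auto intro: center_ra[OF ra_funpow])
lemma NN_nz: "ring_aut \<sigma> \<Longrightarrow> k \<noteq> 0 \<Longrightarrow> NN \<sigma> k i \<noteq> 0"
  unfolding NN_def by (rule prod_list_nz) (auto dest: ra_nz[OF ra_funpow])
lemma NN_sig: "ring_aut \<sigma> \<Longrightarrow> k * \<sigma> (NN \<sigma> k i) = NN \<sigma> k (Suc i)"
  unfolding NN_Suc2 by (simp add: NN_def ra_prod_list comp_def)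

lemma hilbert90:
  assumes a: "ring_aut (\<sigma>::'a::division_ring \<Rightarrow> 'a)" and o: "order_on_center \<sigma> m"
    and k: "k \<in> center" "k \<noteq> 0" and nrm: "norm_F \<sigma> m k = 1"
  shows "\<exists>c\<in>center. c \<noteq> 0 \<and> \<sigma> c = k * c"
proof -
  have m: "0 < m" using o by (simp add: order_on_center_def)
  obtain x where x: "x \<in> center" "(\<Sum>i\<in>{..<m}. NN \<sigma> k i * (\<sigma>^^i) x) \<noteq> 0"
    using dedekind[OF a o, of "{..<m}" "NN \<sigma> k"] m NN_center[OF a k(1)] NN_nz[OF a k(2)] by auto
  define g where "g i = NN \<sigma> k i * (\<sigma>^^i) x" for i
  define b where "b = (\<Sum>i\<in>{..<m}. g i)"
  have bnz: "b \<noteq> 0" using x unfolding b_def g_def by simp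
  have bc: "b \<in> center" unfolding b_def g_def
    by (rule center_sum) (auto intro!: center_mult NN_center[OF a k(1)] center_ra[OF ra_funpow[OF a]] x)
  have "k * \<sigma> b = (\<Sum>i\<in>{..<m}. k * \<sigma> (g i))" unfolding b_def by (simp add: ra_sum[OF a] sum_distrib_left)
  also have "\<dots> = (\<Sum>i\<in>{..<m}. g (Suc i))"
    unfolding g_def by (simp add: ra_mult[OF a] NN_sig[OF a, symmetric] mult.assoc)
  also have "\<dots> = b"
  proof -
    have g0: "g 0 = x" by (simp add: g_def NN_def)
    have gm: "g m = x" using nrm o x(1) by (simp add: g_def NN_def norm_F_def order_on_center_def)
    have "(\<Sum>i\<in>{..<m}. g (Suc i)) + g 0 = (\<Sum>i\<in>{..<Suc m}. g i)"
      by (simp only: sum.lessThan_Suc_shift add.commute)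
    also have "\<dots> = b + g m" by (simp only: b_def sum.lessThan_Suc)
    finally show ?thesis using g0 gm by simp
  qed
  finally have kb: "k * \<sigma> b = b" .
  have sb: "\<sigma> b = inverse k * b" using kb k(2)
    by (metis left_inverse mult.assoc mult_1_left)
  have "\<sigma> (inverse b) = inverse b * k"
    using sb bnz k(2) by (simp add: ra_inverse[OF a] nonzero_inverse_mult_distrib)
  also have "\<dots> = k * inverse b" using center_comm[OF k(1)] by simp
  finally have "\<sigma> (inverse b) = k * inverse b" .
  moreover have "inverse b \<noteq> 0" using bnz by simp
  ultimately show ?thesis using center_inverse[OF bc] by blast
qed

lemma tw_mult_tm:
  assumes a: "ring_aut (\<sigma>::'a::division_ring \<Rightarrow> 'a)" and m: "0 < m"
  shows "tw_mult \<sigma> q (tm_minus_d m d) n = (if m \<le> n then q (n - m) else 0) - q n * (\<sigma>^^n) d"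
proof -
  have t: "q i * (\<sigma>^^i) (tm_minus_d m d (n - i)) =
      (if i = n - m \<and> m \<le> n then q i else 0) - (if i = n then q i * (\<sigma>^^i) d else 0)"
    if "i \<le> n" for i
  proof -
    have r: "ring_aut (\<sigma>^^i)" using ra_funpow[OF a] .
    have z0: "\<And>j. (\<sigma>^^j) 0 = 0" using ra_zero[OF ra_funpow[OF a]] .
    show ?thesis using that m
      by (auto simp: tm_minus_d_def ra_diff[OF r] ra_one[OF r] z0 algebra_simps)
  qed
  have "tw_mult \<sigma> q (tm_minus_d m d) n = (\<Sum>i\<le>n. (if i = n - m \<and> m \<le> n then q i else 0) - (if i = n then q i * (\<sigma>^^i) d else 0))"
    unfolding tw_mult_def using t by (rule sum.cong[OF refl]) simp
  also have "\<dots> = (if m \<le> n then q (n - m) else 0) - q n * (\<sigma>^^n) d"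
    by (simp add: sum_subtractf sum.delta_remove)
  finally show ?thesis .
qed

lemma petit_mult_eq:
  assumes a: "ring_aut (\<sigma>::'a::division_ring \<Rightarrow> 'a)" and m: "0 < m"
    and r0: "r0 \<in> petit_carrier m" and e: "tw_mult \<sigma> g h = r0"
  shows "petit_mult \<sigma> m d g h = r0"
  unfolding petit_mult_def
proof (rule the_equality)
  have z: "tw_mult \<sigma> (\<lambda>_. 0) f = (\<lambda>_. 0)" for f by (rule ext) (simp add: tw_mult_def)
  show "r0 \<in> petit_carrier m \<and> (\<exists>q. tw_poly q \<and> tw_mult \<sigma> g h = tw_add (tw_mult \<sigma> q (tm_minus_d m d)) r0)"
    using r0 e by (intro conjI exI[of _ "\<lambda>_. 0"]) (auto simp: z tw_poly_def tw_add_def)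
next
  fix r assume "r \<in> petit_carrier m \<and> (\<exists>q. tw_poly q \<and> tw_mult \<sigma> g h = tw_add (tw_mult \<sigma> q (tm_minus_d m d)) r)"
  then obtain q where r: "r \<in> petit_carrier m" and q: "tw_poly q"
    and eq: "r0 = tw_add (tw_mult \<sigma> q (tm_minus_d m d)) r" using e by blast
  have q0: "q = (\<lambda>_. 0)"
  proof (rule ccontr)
    assume "q \<noteq> (\<lambda>_. 0)"
    then obtain i where i: "q i \<noteq> 0" by auto
    obtain N where N: "\<forall>i\<ge>N. q i = 0" using q tw_poly_def by blast
    define S where "S = {i. q i \<noteq> 0}"
    have "S \<subseteq> {..<N}" unfolding S_def using N not_le by auto
    hence fS: "finite S" using finite_subset by blast
    have "i \<in> S" using i S_def by simp
    define M where "M = Max S"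
    have MS: "M \<in> S" unfolding M_def using fS \<open>i \<in> S\<close> by (metis Max_in empty_iff)
    have big: "q j = 0" if "j > M" for j
      using that fS Max_ge unfolding M_def S_def by fastforce
    have "r0 (M + m) = 0" using r0 unfolding petit_carrier_def by simp
    moreover have "r (M + m) = 0" using r unfolding petit_carrier_def by simp
    moreover have "q (M + m) = 0" using big m by simp
    moreover have "tw_mult \<sigma> q (tm_minus_d m d) (M + m) = q M - q (M + m) * (\<sigma>^^(M + m)) d"
      using tw_mult_tm[OF a m, of q d "M + m"] by simp
    moreover have "r0 (M + m) = tw_mult \<sigma> q (tm_minus_d m d) (M + m) + r (M + m)"
      using eq unfolding tw_add_def by simp
    ultimately have "q M = 0" by simp
    thus False using MS S_def by simp
  qed
  have z: "tw_mult \<sigma> (\<lambda>_. 0) f = (\<lambda>_. 0)" for f by (rule ext) (simp add: tw_mult_def)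
  show "r = r0" using eq q0 by (simp add: z tw_add_def)
qed

lemma tw_mult_const_left: "tw_mult \<sigma> (tw_const a) x n = a * x n"
proof -
  have "tw_mult \<sigma> (tw_const a) x n = (\<Sum>i\<le>n. if i = 0 then a * x n else 0)"
    unfolding tw_mult_def tw_const_def by (rule sum.cong) auto
  thus ?thesis by simp
qed

lemma tw_mult_const_right:
  assumes a: "ring_aut (\<sigma>::'a::division_ring \<Rightarrow> 'a)"
  shows "tw_mult \<sigma> y (tw_const c) n = y n * (\<sigma>^^n) c"
proof -
  have "tw_mult \<sigma> y (tw_const c) n = (\<Sum>i\<le>n. if i = n then y n * (\<sigma>^^n) c else 0)"
    unfolding tw_mult_def tw_const_def by (rule sum.cong) (auto simp: ra_zero[OF ra_funpow[OF a]])
  thus ?thesis by simp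
qed

lemma sig_pow_c:
  assumes a: "ring_aut (\<sigma>::'a::division_ring \<Rightarrow> 'a)" and k: "k \<in> center" and c: "\<sigma> c = k * c"
  shows "(\<sigma>^^n) c = NN \<sigma> k n * c"
proof (induction n)
  case 0 thus ?case by (simp add: NN_def)
next
  case (Suc n)
  have "(\<sigma>^^Suc n) c = (\<sigma>^^n) (k * c)" by (simp only: funpow_Suc_right comp_def c)
  also have "\<dots> = (\<sigma>^^n) k * (NN \<sigma> k n * c)" using Suc ra_mult[OF ra_funpow[OF a]] by simp
  also have "\<dots> = NN \<sigma> k n * (\<sigma>^^n) k * c"
    using center_comm[OF center_ra[OF ra_funpow[OF a] k]] by (simp add: mult.assoc[symmetric])
  finally show ?case by (simp add: NN_Suc)
qed

theorem proposition3p4: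
  fixes \<sigma> :: "'a::division_ring \<Rightarrow> 'a" and m :: nat and d k :: 'a
  assumes "fin_dim_over_center TYPE('a)"
    and "ring_aut \<sigma>"
    and "order_on_center \<sigma> m"
    and "d \<notin> fixed_center \<sigma>"
    and "k \<in> center" and "k \<noteq> 0"
    and "norm_F \<sigma> m k = 1"
    and "petit_aut \<sigma> m d (H_id \<sigma> m k)"
  shows "\<exists>c\<in>center. c \<noteq> 0 \<and> k = \<sigma> c * inverse c \<and>
           (\<forall>x\<in>petit_carrier m. H_id \<sigma> m k x = G_inner \<sigma> m d c x)"
proof -
  note a = assms(2)
  have m: "0 < m" using assms(3) by (simp add: order_on_center_def)
  obtain c where c: "c \<in> center" "c \<noteq> 0" "\<sigma> c = k * c"
    using hilbert90[OF a assms(3) assms(5) assms(6) assms(7)] by blast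
  have kc: "k = \<sigma> c * inverse c" using c by (simp add: mult.assoc)
  have "H_id \<sigma> m k x = G_inner \<sigma> m d c x" if x: "x \<in> petit_carrier m" for x
  proof -
    define y where "y n = inverse c * x n" for n
    define z where "z n = y n * (\<sigma>^^n) c" for n
    have y: "y \<in> petit_carrier m" using x unfolding y_def petit_carrier_def by simp
    have zc: "z \<in> petit_carrier m" using y unfolding z_def petit_carrier_def by simp
    have p1: "petit_mult \<sigma> m d (tw_const (inverse c)) x = y"
      by (rule petit_mult_eq[OF a m y]) (rule ext, simp add: tw_mult_const_left y_def)
    have p2: "petit_mult \<sigma> m d y (tw_const c) = z"
      by (rule petit_mult_eq[OF a m zc]) (rule ext, simp add: tw_mult_const_right[OF a] z_def)
    have "H_id \<sigma> m k x n = z n" for n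
    proof (cases "n < m")
      case True
      have ic: "inverse c * x n = x n * inverse c" using center_comm[OF center_inverse[OF c(1)]] by simp
      have "z n = inverse c * x n * (NN \<sigma> k n * c)" unfolding z_def y_def using sig_pow_c[OF a assms(5) c(3)] by simp
      also have "\<dots> = x n * (inverse c * (c * NN \<sigma> k n))"
        using ic center_comm[OF NN_center[OF a assms(5)]] by (simp add: mult.assoc)
      also have "\<dots> = x n * NN \<sigma> k n" using c(2) by (simp add: mult.assoc[symmetric])
      finally show ?thesis using True by (simp add: H_id_def NN_def)
    next
      case False thus ?thesis using x by (simp add: H_id_def z_def y_def petit_carrier_def)
    qed
    thus ?thesis unfolding G_inner_def p1 p2 by auto
  qed
  thus ?thesis using c kc by blast
qed

end
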